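(* Let $p,t\geq 1$ be integers and let $m,n$ be even positive integers with $m\leq n$. Let $G$ be a regular graph of order $p$. If (i) $m+n\equiv 0\pmod 4$ and (ii) $1=2(2ptn+1)^2-(2ptm+2ptn+1)^2$ or $m\geq(\sqrt2-1)n+\frac{\sqrt2-1}{2pt}$, then $tK_{m,n}\otimes G$ is distance magic.
   Context: A graph $G$ on $v$ vertices is distance magic if there is a bijection $f:V(G)\to\{1,\ldots,v\}$ and a constant $k$ such that for every vertex $x$, $\sum_{y\in N(x)}f(y)=k$, where $N(x)$ is the set of neighbours of $x$. $K_{m,n}$ is the complete bipartite graph with parts of sizes $m$ and $n$; $tH$ denotes the disjoint union of $t$ copies of $H$. The Kronecker (tensor) product $G\otimes H$ has vertex set $V(G)\times V(H)$, with $(g,h)\sim(g',h')$ iff $gg'\in E(G)$ and $hh'\in E(H)$. *)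

theory Defs
  imports Complex_Main
begin

definition simple_graph :: "'a set \<Rightarrow> ('a \<Rightarrow> 'a \<Rightarrow> bool) \<Rightarrow> bool" where
  "simple_graph V E \<longleftrightarrow> finite V \<and> (\<forall>x y. E x y \<longrightarrow> x \<in> V \<and> y \<in> V \<and> x \<noteq> y \<and> E y x)"

definition nbhd :: "'a set \<Rightarrow> ('a \<Rightarrow> 'a \<Rightarrow> bool) \<Rightarrow> 'a \<Rightarrow> 'a set" where
  "nbhd V E x = {y \<in> V. E x y}"

definition regular_graph :: "'a set \<Rightarrow> ('a \<Rightarrow> 'a \<Rightarrow> bool) \<Rightarrow> bool" where
  "regular_graph V E \<longleftrightarrow> simple_graph V E \<and> (\<exists>r. \<forall>x\<in>V. card (nbhd V E x) = r)"

definition distance_magic :: "'a set \<Rightarrow> ('a \<Rightarrow> 'a \<Rightarrow> bool) \<Rightarrow> bool" where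
  "distance_magic V E \<longleftrightarrow>
     (\<exists>(f :: 'a \<Rightarrow> nat) (k :: nat). bij_betw f V {1..card V} \<and>
        (\<forall>x\<in>V. (\<Sum>y\<in>nbhd V E x. f y) = k))"

text \<open>Disjoint union of t copies of K_{m,n}: vertex (i, b, j) is the j-th vertex of
  side b (False: part of size m, True: part of size n) in copy i.\<close>

definition tKmn_verts :: "nat \<Rightarrow> nat \<Rightarrow> nat \<Rightarrow> (nat \<times> bool \<times> nat) set" where
  "tKmn_verts t m n = {(i, b, j). i < t \<and> j < (if b then n else m)}"

definition tKmn_adj :: "nat \<Rightarrow> nat \<Rightarrow> nat \<Rightarrow> (nat \<times> bool \<times> nat) \<Rightarrow> (nat \<times> bool \<times> nat) \<Rightarrow> bool" where
  "tKmn_adj t m n u w \<longleftrightarrow> u \<in> tKmn_verts t m n \<and> w \<in> tKmn_verts t m n \<and>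
      fst u = fst w \<and> fst (snd u) \<noteq> fst (snd w)"

definition kron_verts :: "'a set \<Rightarrow> 'b set \<Rightarrow> ('a \<times> 'b) set" where
  "kron_verts V1 V2 = V1 \<times> V2"

definition kron_adj :: "('a \<Rightarrow> 'a \<Rightarrow> bool) \<Rightarrow> ('b \<Rightarrow> 'b \<Rightarrow> bool) \<Rightarrow> ('a \<times> 'b) \<Rightarrow> ('a \<times> 'b) \<Rightarrow> bool" where
  "kron_adj E1 E2 u w \<longleftrightarrow> E1 (fst u) (fst w) \<and> E2 (snd u) (snd w)"

end

theory Submission imports Defs begin


lemma sum_sigma:
  fixes q \<beta> :: nat assumes "\<beta> < q"
  shows "(\<Sum>r<2*k. (if even r then \<beta>+1 else q - \<beta>)) = k*(q+1)"
proof (induction k)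
  case 0 then show ?case by simp
next
  case (Suc k)
  have "(\<Sum>r<2*Suc k. (if even r then \<beta>+1 else q - \<beta>)) =
        (\<Sum>r<2*k. (if even r then \<beta>+1 else q - \<beta>)) + (\<beta>+1) + (q-\<beta>)"
    by simp
  then show ?case using Suc assms by simp
qed

lemma sum_gauss2: "(\<Sum>r<2*k. (r::nat)) + k = 2*k*k"
proof (induction k)
  case 0 then show ?case by simp
next
  case (Suc k)
  have "(\<Sum>r<2*Suc k. r) = (\<Sum>r<2*k. r) + 2*k + (2*k+1)" by simp
  then show ?case using Suc by (simp add: algebra_simps)
qed

lemma sum_ind:
  fixes E K :: nat assumes "E \<le> K"
  shows "(\<Sum>r<K. (if K - E \<le> r then 1 else 0::nat)) = E"
proof -
  have "(\<Sum>r<K. (if K - E \<le> r then 1 else 0::nat)) = card ({..<K} \<inter> {r. K - E \<le> r})"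
    by (simp add: sum.If_cases)
  also have "{..<K} \<inter> {r. K - E \<le> r} = {K-E..<K}" by auto
  finally show ?thesis using assms by simp
qed


lemma rows_exist:
  fixes q k H X :: nat
  assumes q: "q \<ge> 1" and kq: "2*k*q \<le> H" and X: "X \<le> 2*k*(H - 2*k*q)"
  shows "\<exists>P. (\<forall>\<beta><q. P \<beta> \<subseteq> {1..H} \<and> card (P \<beta>) = 2*k \<and>
              \<Sum>(P \<beta>) + q*k = 2*q*k*k + X + k*(q+1)) \<and>
             (\<forall>\<beta><q. \<forall>\<beta>'<q. \<beta> \<noteq> \<beta>' \<longrightarrow> P \<beta> \<inter> P \<beta>' = {})"
proof (cases "k = 0")
  case True
  then have "X = 0" using X by simp
  then show ?thesis using True by (intro exI[of _ "\<lambda>_. {}"]) auto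
next
  case False
  then have kpos: "k > 0" by simp
  define G where "G = H - 2*k*q"
  define D where "D = X div (2*k)"
  define E where "E = X mod (2*k)"
  have XDE: "X = 2*k*D + E" unfolding D_def E_def by simp
  have E2k: "E < 2*k" unfolding E_def using kpos by simp
  define b where "b r = r*q + D + (if 2*k - E \<le> r then 1 else 0)" for r :: nat
  define \<sigma> where "\<sigma> r \<beta> = (if even r then \<beta>+1 else q - \<beta>)" for r \<beta> :: nat
  define v where "v r \<beta> = b r + \<sigma> r \<beta>" for r \<beta>
  have \<sigma>b: "1 \<le> \<sigma> r \<beta> \<and> \<sigma> r \<beta> \<le> q" if "\<beta> < q" for r \<beta>
    using that unfolding \<sigma>_def by auto
  have \<sigma>inj: "\<beta> = \<beta>'" if "\<beta> < q" "\<beta>' < q" "\<sigma> r \<beta> = \<sigma> r \<beta>'" for r \<beta> \<beta>'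
    using that unfolding \<sigma>_def by (auto split: if_splits)
  have bmono: "b r + q \<le> b r'" if "r < r'" for r r'
  proof -
    have "r*q + q \<le> r'*q" using that
      by (metis Suc_leI add.commute mult_Suc mult_le_mono1)
    then show ?thesis unfolding b_def using that by auto
  qed
  have vless: "v r \<beta> < v r' \<beta>'" if "r < r'" "\<beta> < q" "\<beta>' < q" for r r' \<beta> \<beta>'
    using bmono[OF that(1)] \<sigma>b[OF that(2), of r] \<sigma>b[OF that(3), of r']
    unfolding v_def by linarith
  have DG: "D + (if 2*k - E \<le> r then 1 else 0) \<le> G" if "r < 2*k" for r
  proof (cases "2*k - E \<le> r")
    case True
    then have "E > 0" using that by linarith
    then have "2*k*D < 2*k*G" using X XDE unfolding G_def by linarith
    then have "D < G" by simp
    then show ?thesis using True by simp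
  next
    case False
    have "2*k*D \<le> 2*k*G" using X XDE unfolding G_def by linarith
    then have "D \<le> G" using kpos by simp
    then show ?thesis using False by simp
  qed
  have vrange: "1 \<le> v r \<beta> \<and> v r \<beta> \<le> H" if "r < 2*k" "\<beta> < q" for r \<beta>
  proof -
    have "r*q + q \<le> 2*k*q" using that(1)
      by (metis Suc_leI add.commute mult_Suc mult_le_mono1)
    then show ?thesis using DG[OF that(1)] \<sigma>b[OF that(2), of r] kq
      unfolding v_def b_def G_def by linarith
  qed
  define P where "P \<beta> = (\<lambda>r. v r \<beta>) ` {..<2*k}" for \<beta>
  have injv: "inj_on (\<lambda>r. v r \<beta>) {..<2*k}" if "\<beta> < q" for \<beta>
    unfolding inj_on_def
    by (metis linorder_neqE_nat order_less_irrefl that vless)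
  have sumb: "(\<Sum>r<2*k. b r) + q*k = 2*q*k*k + 2*k*D + E"
  proof -
    have "(\<Sum>r<2*k. b r) = q*(\<Sum>r<2*k. r) + 2*k*D + (\<Sum>r<2*k. (if 2*k - E \<le> r then 1 else 0::nat))"
      unfolding b_def by (simp add: sum.distrib sum_distrib_left mult.commute)
    also have "(\<Sum>r<2*k. (if 2*k - E \<le> r then 1 else 0::nat)) = E"
      using sum_ind[of E "2*k"] E2k by simp
    finally have "(\<Sum>r<2*k. b r) + q*k = q*((\<Sum>r<2*k. r) + k) + 2*k*D + E"
      by (simp add: algebra_simps)
    moreover have "q*((\<Sum>r<2*k. r) + k) = q*(2*k*k)" using sum_gauss2[of k] by simp
    ultimately show ?thesis by (simp add: algebra_simps)
  qed
  show ?thesis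
  proof (intro exI[of _ P] conjI allI impI)
    fix \<beta> assume \<beta>: "\<beta> < q"
    show "P \<beta> \<subseteq> {1..H}" unfolding P_def using vrange \<beta> by auto
    show "card (P \<beta>) = 2*k" unfolding P_def using card_image[OF injv[OF \<beta>]] by simp
    have "\<Sum>(P \<beta>) = (\<Sum>r<2*k. v r \<beta>)" unfolding P_def
      using sum.reindex[OF injv[OF \<beta>], of id] by simp
    also have "\<dots> = (\<Sum>r<2*k. b r) + k*(q+1)"
      unfolding v_def using sum_sigma[OF \<beta>, of k] by (simp add: sum.distrib \<sigma>_def)
    finally show "\<Sum>(P \<beta>) + q*k = 2*q*k*k + X + k*(q+1)" using sumb XDE by simp
  next
    fix \<beta> \<beta>' assume h: "\<beta> < q" "\<beta>' < q" "\<beta> \<noteq> \<beta>'"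
    show "P \<beta> \<inter> P \<beta>' = {}"
    proof (rule ccontr)
      assume "P \<beta> \<inter> P \<beta>' \<noteq> {}"
      then obtain r r' where rr: "r < 2*k" "r' < 2*k" "v r \<beta> = v r' \<beta>'" unfolding P_def by auto
      have "r = r'" using vless[of r r' \<beta> \<beta>'] vless[of r' r \<beta>' \<beta>] h rr
        by (metis linorder_neqE_nat order_less_irrefl)
      then have "\<sigma> r \<beta> = \<sigma> r \<beta>'" using rr unfolding v_def by simp
      then show False using \<sigma>inj h by blast
    qed
  qed
qed



lemma aux_lin4: "0 \<le> 4*((x::int) - y - z) \<Longrightarrow> y + z \<le> x" by arith

lemma choose_k:
  fixes q m d :: nat
  assumes q: "q \<ge> 1" and me: "even m" and mpos: "m > 0"
    and L: "int q*int m^2 + 2*int q*int m*int (m+4*d) - int q*int (m+4*d)^2 + int m - int (m+4*d) \<ge> 0"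
  shows "\<exists>k. 2*k \<le> m \<and> d \<le> k \<and> 2*q*k*k \<le> d*(q*(m+(m+4*d))+1) \<and>
             int (2*q*k*k + k) \<le> (int k - int d) * int (q*(m+(m+4*d))+1)"
proof -
  define A where "A = q*(m+(m+4*d))+1"
  define P where "P k = (2*k \<le> m \<and> 2*q*k*k \<le> d*A)" for k
  have "P 0" unfolding P_def by simp
  moreover have "\<forall>y. P y \<longrightarrow> y \<le> m" unfolding P_def by auto
  ultimately obtain k where Pk: "P k" and kmax: "\<And>y. P y \<Longrightarrow> y \<le> k"
    using Nat.ex_has_greatest_nat[of P 0 m] by blast
  have k2m: "2*k \<le> m" and kA: "2*q*k*k \<le> d*A" using Pk unfolding P_def by auto
  show ?thesis
  proof (cases "d = 0")
    case True
    then have "k = 0" using kA q by simp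
    then show ?thesis using True by (intro exI[of _ 0]) simp
  next
    case False
    then have dnz: "d \<noteq> 0" .
    show ?thesis
    proof (cases "2*(k+1) \<le> m")
      case True
      then have nP: "\<not> 2*q*(k+1)*(k+1) \<le> d*A" using kmax[of "k+1"] unfolding P_def by auto
      have k1: "k \<ge> 1"
      proof (rule ccontr)
        assume "\<not> k \<ge> 1"
        then have "k = 0" by simp
        then have "d*A < 2*q" using nP by simp
        moreover have "A \<le> d*A" using False by simp
        moreover have "2*q < A"
        proof -
          have "2 \<le> m + (m+4*d)" using mpos by simp
          then have "q*2 \<le> q*(m + (m+4*d))" by (rule mult_le_mono2)
          then show ?thesis unfolding A_def by linarith
        qed
        ultimately show False by linarith
      qed
      have "d \<ge> 1" using False by simp
      then have mn: "m + (m + 4*d) \<ge> 4*k + 8" using True by arith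
      have "d*A < 2*q*(k+1)*(k+1)" using nP by simp
      then have "int (d*A) < int (2*q*(k+1)*(k+1))" by linarith
      then have i1: "int d * int A \<le> 2*int q*(int k+1)*(int k+1) - 1" by (simp add: algebra_simps)
      have i2: "int k * int q * int (m + (m+4*d)) \<ge> int k * int q * (4*int k + 8)"
        using mn by (intro mult_left_mono) auto
      have A': "int A = int q * int (m + (m+4*d)) + 1" unfolding A_def by simp
      have e1: "(int k - int d) * int A = int k * int q * int (m + (m+4*d)) + int k - int d * int A"
        unfolding A' by (simp add: algebra_simps)
      have e2: "2*int q*(int k+1)*(int k+1) = 2*(int q*int k*int k) + 4*(int q*int k) + 2*int q"
        by (simp add: algebra_simps)
      have e3: "int k*int q*(4*int k+8) = 4*(int q*int k*int k) + 8*(int q*int k)"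
        by (simp add: algebra_simps)
      have e4: "int q * int k \<ge> int q" using k1 q by simp
      have e5: "int (2*q*k*k + k) = 2*(int q*int k*int k) + int k" by simp
      have main: "int (2*q*k*k + k) \<le> (int k - int d) * int A"
        using e1 e2 e3 e4 e5 i1 i2 by linarith
      have "int (2*q*k*k + k) > 0" using k1 by (simp only: of_nat_0_less_iff)
      then have "(int k - int d) * int A > 0" using main by linarith
      moreover have "int A > 0" unfolding A_def by (simp only: of_nat_0_less_iff)
      ultimately have "int k - int d > 0" using zero_less_mult_pos2 by blast
      then have "d \<le> k" by simp
      then show ?thesis using k2m kA main unfolding A_def by blast
    next
      case False
      then have "2*k = m" using k2m me by presburger
      have mk: "int m = 2*int k" using \<open>2*k = m\<close> by simp
      have LL: "int q*int m^2 + 2*int q*int m*int (m+4*d) - int q*int (m+4*d)^2 + int m - int (m+4*d)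
          = 4*(2*(int q*int k*int k) - 4*(int q*int d*int d) - int d)"
        unfolding of_nat_add of_nat_mult mk by (simp add: algebra_simps power2_eq_square)
      have "0 \<le> 4*(2*(int q*int k*int k) - 4*(int q*int d*int d) - int d)" using L by (simp only: LL)
      then have key: "2*(int q*int k*int k) \<ge> 4*(int q*int d*int d) + int d"
        using aux_lin4[of "2*(int q*int k*int k)" "4*(int q*int d*int d)" "int d"] by blast
      have dk: "d \<le> k"
      proof (rule ccontr)
        assume "\<not> d \<le> k"
        then have "k < d" by simp
        then have "k*k \<le> d*d" by (simp add: mult_le_mono)
        then have "q*(k*k) \<le> q*(d*d)" by simp
        then have "int q*int k*int k \<le> int q*int d*int d"
          by (metis mult.assoc of_nat_le_iff of_nat_mult)
        moreover have "int q*int d*int d \<ge> 0" by simp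
        moreover have "int d \<ge> 1" using dnz by simp
        ultimately show False using key by linarith
      qed
      have A': "int A = int q * (4*int k + 4*int d) + 1" unfolding A_def using mk by simp
      have "(int k - int d) * int A = 4*(int q*int k*int k) - 4*(int q*int d*int d) + int k - int d"
        unfolding A' by (simp add: algebra_simps)
      moreover have "int (2*q*k*k + k) = 2*(int q*int k*int k) + int k" by simp
      ultimately have main: "int (2*q*k*k + k) \<le> (int k - int d) * int A" using key by linarith
      show ?thesis using k2m kA main dk unfolding A_def by blast
    qed
  qed
qed


lemma blk_eq:
  fixes \<beta> \<beta>' W x :: nat
  assumes "\<beta>*W \<le> x" "x < \<beta>*W + W" "\<beta>'*W \<le> x" "x < \<beta>'*W + W"
  shows "\<beta> = \<beta>'"
proof (rule ccontr)
  assume "\<beta> \<noteq> \<beta>'"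
  then consider "Suc \<beta> \<le> \<beta>'" | "Suc \<beta>' \<le> \<beta>" by linarith
  then show False
  proof cases
    case 1
    then have "Suc \<beta> * W \<le> \<beta>' * W" by (rule mult_le_mono1)
    then show False using assms by simp
  next
    case 2
    then have "Suc \<beta>' * W \<le> \<beta> * W" by (rule mult_le_mono1)
    then show False using assms by simp
  qed
qed

lemma co_sum:
  fixes A :: nat and S :: "nat set"
  assumes "finite S" "\<forall>u\<in>S. u < A"
  shows "int (\<Sum>((\<lambda>u. A - u) ` S)) = int (card S) * int A - int (\<Sum>S)"
proof -
  have inj: "inj_on (\<lambda>u. A - u) S" using assms(2) unfolding inj_on_def by auto
  have "\<Sum>((\<lambda>u. A - u) ` S) = (\<Sum>u\<in>S. A - u)" using sum.reindex[OF inj, of id] by simp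
  then have "int (\<Sum>((\<lambda>u. A - u) ` S)) = (\<Sum>u\<in>S. int A - int u)"
    using assms(2) by (simp add: of_nat_diff less_imp_le)
  also have "\<dots> = int (card S) * int A - int (\<Sum>S)"
    by (simp add: sum_subtractf of_nat_sum)
  finally show ?thesis .
qed


lemma partition_blocks:
  fixes q a d :: nat
  assumes q: "q \<ge> 1" and apos: "a > 0"
    and L: "int q*int (2*a)^2 + 2*int q*int (2*a)*int (2*a+4*d) - int q*int (2*a+4*d)^2 + int (2*a) - int (2*a+4*d) \<ge> 0"
  shows "\<exists>Bk. (\<forall>\<beta><q. \<forall>b. Bk \<beta> b \<subseteq> {1..q*(4*a+4*d)} \<and> card (Bk \<beta> b) = (if b then 2*a+4*d else 2*a) \<and>
                 \<Sum>(Bk \<beta> b) = (a+d)*(q*(4*a+4*d)+1)) \<and>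
             (\<forall>\<beta><q. \<forall>\<beta>'<q. \<forall>b b'. (\<beta>,b) \<noteq> (\<beta>',b') \<longrightarrow> Bk \<beta> b \<inter> Bk \<beta>' b' = {})"
proof -
  define H where "H = q*(2*a+2*d)"
  define A where "A = 2*H+1"
  have AH: "A = q*(4*a+4*d)+1" unfolding A_def H_def by simp
  have L': "int q*int (2*a)^2 + 2*int q*int (2*a)*int (2*a+4*d) - int q*int (2*a+4*d)^2 + int (2*a) - int (2*a+4*d) \<ge> 0"
    using L by simp
  obtain k where k2m: "2*k \<le> 2*a" and dk: "d \<le> k" and kA: "2*q*k*k \<le> d*A"
    and kmain: "int (2*q*k*k + k) \<le> (int k - int d) * int A"
  proof -
    have AA: "q*(2*a+(2*a+4*d))+1 = A" unfolding AH by simp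
    have "\<exists>k. 2*k \<le> 2*a \<and> d \<le> k \<and> 2*q*k*k \<le> d*(q*(2*a+(2*a+4*d))+1) \<and>
             int (2*q*k*k + k) \<le> (int k - int d) * int (q*(2*a+(2*a+4*d))+1)"
      by (rule choose_k[of q "2*a" d]) (use q apos L in auto)
    then show ?thesis using that unfolding AA by blast
  qed
  define X where "X = nat ((int k - int d) * int A - int (2*q*k*k + k))"
  have Xi: "int X = (int k - int d) * int A - int (2*q*k*k + k)" unfolding X_def using kmain by simp
  have kq: "2*k*q \<le> H" unfolding H_def using k2m by (simp add: mult.commute)
  have "int X \<le> int (2*k*(H - 2*k*q))"
  proof -
    have "int (2*k*(H - 2*k*q)) = 2*int k*int H - 4*(int q*int k*int k)"
      using kq by (simp add: of_nat_diff algebra_simps)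
    moreover have "int X = 2*int k*int H - int d*int A - 2*(int q*int k*int k)"
      unfolding Xi A_def by (simp add: algebra_simps)
    moreover have "int (2*q*k*k) \<le> int (d * A)" using kA by (simp only: of_nat_le_iff)
    moreover have "int (2*q*k*k) = 2*(int q*int k*int k)" "int (d*A) = int d * int A" by simp_all
    ultimately show ?thesis by linarith
  qed
  then have Xb: "X \<le> 2*k*(H - 2*k*q)" by linarith
  obtain P where Psub: "\<And>\<beta>. \<beta> < q \<Longrightarrow> P \<beta> \<subseteq> {1..H}"
    and Pcard: "\<And>\<beta>. \<beta> < q \<Longrightarrow> card (P \<beta>) = 2*k"
    and Psum0: "\<And>\<beta>. \<beta> < q \<Longrightarrow> \<Sum>(P \<beta>) + q*k = 2*q*k*k + X + k*(q+1)"
    and Pdisj: "\<And>\<beta> \<beta>'. \<beta> < q \<Longrightarrow> \<beta>' < q \<Longrightarrow> \<beta> \<noteq> \<beta>' \<Longrightarrow> P \<beta> \<inter> P \<beta>' = {}"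
    using rows_exist[OF q kq Xb] by metis
  have Psum: "int (\<Sum>(P \<beta>)) = (int k - int d) * int A" if "\<beta> < q" for \<beta>
  proof -
    have "int (\<Sum>(P \<beta>)) + int q * int k = 2*int q*int k*int k + int X + int k*(int q+1)"
    proof -
      have "int (\<Sum>(P \<beta>) + q*k) = int (2*q*k*k + X + k*(q+1))" using Psum0[OF that] by (simp only:)
      then show ?thesis by (simp add: algebra_simps)
    qed
    then show ?thesis unfolding Xi by (simp add: algebra_simps)
  qed
  define U where "U = (\<Union>\<beta>\<in>{..<q}. P \<beta>)"
  define C where "C = {1..H} - U"
  have UH: "U \<subseteq> {1..H}" unfolding U_def using Psub by auto
  have cardU: "card U = q*(2*k)"
  proof -
    have "card U = (\<Sum>\<beta><q. card (P \<beta>))" unfolding U_def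
      by (rule card_UN_disjoint) (auto intro: finite_subset[OF Psub] dest: Pdisj)
    then show ?thesis using Pcard by simp
  qed
  define m2 where "m2 = a - k"
  define n2 where "n2 = a + 2*d - k"
  define W where "W = m2 + n2"
  have cardC: "card C = q*W"
  proof -
    have "card C = H - q*(2*k)" unfolding C_def using UH cardU
      by (simp add: card_Diff_subset finite_subset)
    then show ?thesis unfolding H_def W_def m2_def n2_def using k2m
      by (simp add: diff_mult_distrib2 algebra_simps)
  qed
  obtain \<pi> where \<pi>: "bij_betw \<pi> {0..<q*W} C"
    using ex_bij_betw_nat_finite[of C] cardC unfolding C_def by auto
  define I where "I \<beta> b = (if b then {\<beta>*W+m2..<\<beta>*W+W} else {\<beta>*W..<\<beta>*W+m2})" for \<beta> and b :: bool
  define Q where "Q \<beta> b = \<pi> ` I \<beta> b" for \<beta> b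
  have Irange: "I \<beta> b \<subseteq> {0..<q*W}" if "\<beta> < q" for \<beta> b
  proof -
    have "Suc \<beta> * W \<le> q * W" using that by (intro mult_le_mono1) simp
    then show ?thesis unfolding I_def W_def by auto
  qed
  have Idisj: "I \<beta> b \<inter> I \<beta>' b' = {}" if "(\<beta>,b) \<noteq> (\<beta>',b')" for \<beta> \<beta>' b b'
  proof (rule ccontr)
    assume "I \<beta> b \<inter> I \<beta>' b' \<noteq> {}"
    then obtain x where x: "x \<in> I \<beta> b" "x \<in> I \<beta>' b'" by auto
    have "\<beta> = \<beta>'" using x unfolding I_def W_def
      by (intro blk_eq[of \<beta> "m2+n2" x \<beta>']) (auto split: if_splits)
    then show False using x that unfolding I_def by (auto split: if_splits)
  qed
  have inj\<pi>: "inj_on \<pi> {0..<q*W}" using \<pi> bij_betw_def by blast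
  have QC: "Q \<beta> b \<subseteq> C" if "\<beta> < q" for \<beta> b
    unfolding Q_def using Irange[OF that] \<pi> bij_betw_imp_surj_on by blast
  have Qdisj: "Q \<beta> b \<inter> Q \<beta>' b' = {}" if "\<beta> < q" "\<beta>' < q" "(\<beta>,b) \<noteq> (\<beta>',b')" for \<beta> \<beta>' b b'
    unfolding Q_def
    using inj_on_image_Int[OF inj\<pi> Irange[OF that(1), of b] Irange[OF that(2), of b']] Idisj[OF that(3)] by simp
  have Qcard: "card (Q \<beta> b) = (if b then n2 else m2)" if "\<beta> < q" for \<beta> b
  proof -
    have "card (Q \<beta> b) = card (I \<beta> b)" unfolding Q_def
      using inj_on_subset[OF inj\<pi> Irange[OF that]] by (rule card_image)
    then show ?thesis unfolding I_def W_def by simp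
  qed
  have PQ: "P \<beta> \<inter> Q \<beta>' b = {}" if "\<beta> < q" "\<beta>' < q" for \<beta> \<beta>' b
    using QC[OF that(2)] that(1) unfolding C_def U_def by blast
  have QH: "Q \<beta> b \<subseteq> {1..H}" if "\<beta> < q" for \<beta> b using QC[OF that] unfolding C_def by blast
  define S where "S \<beta> b = (if b then P \<beta> \<union> Q \<beta> b else Q \<beta> b)" for \<beta> b
  define Lp where "Lp \<beta> b = (if b then Q \<beta> b else P \<beta> \<union> Q \<beta> b)" for \<beta> b
  define co where "co u = A - u" for u
  define Bk where "Bk \<beta> b = S \<beta> b \<union> co ` Lp \<beta> b" for \<beta> b
  have SH: "S \<beta> b \<subseteq> {1..H}" "Lp \<beta> b \<subseteq> {1..H}" if "\<beta> < q" for \<beta> b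
    unfolding S_def Lp_def using QH[OF that] Psub[OF that] by auto
  have coH: "co ` Lp \<beta> b \<subseteq> {H+1..2*H}" if "\<beta> < q" for \<beta> b
  proof
    fix y assume "y \<in> co ` Lp \<beta> b"
    then obtain x where x: "x \<in> Lp \<beta> b" "y = A - x" unfolding co_def by auto
    have "1 \<le> x" "x \<le> H" using SH(2)[OF that, of b] x(1) by auto
    then show "y \<in> {H+1..2*H}" using x(2) unfolding A_def by auto
  qed
  have coinj: "inj_on co {1..H}" unfolding co_def A_def inj_on_def by auto
  have finP: "finite (P \<beta>)" if "\<beta> < q" for \<beta> using Psub[OF that] finite_subset by blast
  have finQ: "finite (Q \<beta> b)" for \<beta> b unfolding Q_def I_def by simp
  show ?thesis
  proof (intro exI[of _ Bk] conjI allI impI)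
    fix \<beta> b assume \<beta>: "\<beta> < q"
    have SHb: "S \<beta> b \<subseteq> {1..H}" "Lp \<beta> b \<subseteq> {1..H}" using SH[OF \<beta>] by auto
    have coHb: "co ` Lp \<beta> b \<subseteq> {H+1..2*H}" using coH[OF \<beta>] by auto
    have "2*H = q*(4*a+4*d)" unfolding H_def by simp
    then show "Bk \<beta> b \<subseteq> {1..q*(4*a+4*d)}"
      using SHb coHb unfolding Bk_def by auto
    have SLd: "S \<beta> b \<inter> co ` Lp \<beta> b = {}" using SHb coHb by fastforce
    have finS: "finite (S \<beta> b)" "finite (Lp \<beta> b)" unfolding S_def Lp_def using finP[OF \<beta>] finQ by auto
    have cardco: "card (co ` Lp \<beta> b) = card (Lp \<beta> b)"
      using inj_on_subset[OF coinj SHb(2)] by (rule card_image)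
    have cardPQ: "card (P \<beta> \<union> Q \<beta> b) = 2*k + card (Q \<beta> b)"
      using card_Un_disjoint[OF finP[OF \<beta>] finQ PQ[OF \<beta> \<beta>]] Pcard[OF \<beta>] by simp
    have cardB: "card (Bk \<beta> b) = card (S \<beta> b) + card (Lp \<beta> b)"
      unfolding Bk_def using card_Un_disjoint[OF finS(1) _ SLd] finS(2) cardco by simp
    show "card (Bk \<beta> b) = (if b then 2*a+4*d else 2*a)"
      unfolding cardB S_def Lp_def using cardPQ Qcard[OF \<beta>] k2m dk unfolding n2_def m2_def
      by auto
    have sumB: "\<Sum>(Bk \<beta> b) = \<Sum>(S \<beta> b) + \<Sum>(co ` Lp \<beta> b)"
      unfolding Bk_def using sum.union_disjoint[OF finS(1) _ SLd] finS(2) by simp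
    have sumco: "int (\<Sum>(co ` Lp \<beta> b)) = int (card (Lp \<beta> b)) * int A - int (\<Sum>(Lp \<beta> b))"
      unfolding co_def using co_sum[OF finS(2), of A] SHb(2) unfolding A_def by fastforce
    have sumPQ: "\<Sum>(P \<beta> \<union> Q \<beta> b) = \<Sum>(P \<beta>) + \<Sum>(Q \<beta> b)"
      using sum.union_disjoint[OF finP[OF \<beta>] finQ PQ[OF \<beta> \<beta>]] by simp
    have f1: "int (\<Sum>(Bk \<beta> b)) = int (\<Sum>(S \<beta> b)) + int (\<Sum>(co ` Lp \<beta> b))"
      using sumB by (simp del: of_nat_sum)
    have f2: "int (\<Sum>(P \<beta> \<union> Q \<beta> b)) = int (\<Sum>(P \<beta>)) + int (\<Sum>(Q \<beta> b))"
      using sumPQ by (simp del: of_nat_sum)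
    have "int (\<Sum>(Bk \<beta> b)) = (int a + int d) * int A"
    proof (cases b)
      case True
      have "int (\<Sum>(Bk \<beta> b)) = int (\<Sum>(P \<beta>)) + int n2 * int A"
        using f1 f2 sumco Qcard[OF \<beta>, of b] True unfolding S_def Lp_def by (simp del: of_nat_sum)
      then show ?thesis using Psum[OF \<beta>] k2m dk unfolding n2_def
        by (simp add: of_nat_diff algebra_simps del: of_nat_sum)
    next
      case False
      have "int (\<Sum>(Bk \<beta> b)) = int (2*k + m2) * int A - int (\<Sum>(P \<beta>))"
        using f1 f2 sumco Qcard[OF \<beta>, of b] cardPQ False unfolding S_def Lp_def by (simp del: of_nat_sum)
      then show ?thesis using Psum[OF \<beta>] k2m dk unfolding m2_def
        by (simp add: of_nat_diff algebra_simps del: of_nat_sum)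
    qed
    then show "\<Sum>(Bk \<beta> b) = (a+d)*(q*(4*a+4*d)+1)" unfolding AH
      by (metis of_nat_add of_nat_eq_iff of_nat_mult)
  next
    fix \<beta> \<beta>' :: nat and b b' :: bool assume h: "\<beta> < q" "\<beta>' < q" "(\<beta>,b) \<noteq> (\<beta>',b')"
    have Sd: "S \<beta> b \<inter> S \<beta>' b' = {}"
      unfolding S_def using Qdisj[OF h] PQ[OF h(1) h(2), of True] PQ[OF h(1) h(2), of False]
        PQ[OF h(2) h(1), of True] PQ[OF h(2) h(1), of False] Pdisj[OF h(1) h(2)] h(3)
      by (auto split: if_splits)
    have Ld: "Lp \<beta> b \<inter> Lp \<beta>' b' = {}"
      unfolding Lp_def using Qdisj[OF h] PQ[OF h(1) h(2), of True] PQ[OF h(1) h(2), of False]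
        PQ[OF h(2) h(1), of True] PQ[OF h(2) h(1), of False] Pdisj[OF h(1) h(2)] h(3)
      by (auto split: if_splits)
    have cLd: "co ` Lp \<beta> b \<inter> co ` Lp \<beta>' b' = {}"
      using inj_on_image_Int[OF coinj SH(2)[OF h(1), of b] SH(2)[OF h(2), of b']] Ld by simp
    show "Bk \<beta> b \<inter> Bk \<beta>' b' = {}"
      unfolding Bk_def using Sd cLd SH(1)[OF h(1), of b] SH(1)[OF h(2), of b'] coH[OF h(1), of b] coH[OF h(2), of b']
      by fastforce
  qed
qed

lemma L_from_ii:
  fixes q m n :: nat and p t :: nat
  assumes qpt: "q = p*t" and q: "q \<ge> 1"
    and ii: "(1::int) = 2 * (2*int p*int t*int n + 1)^2 - (2*int p*int t*int m + 2*int p*int t*int n + 1)^2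
         \<or> real m \<ge> (sqrt 2 - 1) * real n + (sqrt 2 - 1) / (2 * real p * real t)"
  shows "0 \<le> int q*int m^2 + 2*int q*int m*int n - int q*int n^2 + int m - int n"
proof -
  define Lz where "Lz = int q*int m^2 + 2*int q*int m*int n - int q*int n^2 + int m - int n"
  have iden: "(2*int q*int m + 2*int q*int n + 1)^2 - 2 * (2*int q*int n + 1)^2 = 4*int q*Lz - 1"
    unfolding Lz_def by (simp add: algebra_simps power2_eq_square)
  have qpos: "int q > 0" using q by simp
  have pt: "2*int p*int t*int n = 2*int q*int n" "2*int p*int t*int m = 2*int q*int m"
    using qpt by simp_all
  from ii show ?thesis
  proof
    assume h: "(1::int) = 2 * (2*int p*int t*int n + 1)^2 - (2*int p*int t*int m + 2*int p*int t*int n + 1)^2"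
    then have "4*int q*Lz = 0" using iden unfolding pt by linarith
    then have "Lz = 0" using qpos by simp
    then show ?thesis unfolding Lz_def by simp
  next
    assume h: "real m \<ge> (sqrt 2 - 1) * real n + (sqrt 2 - 1) / (2 * real p * real t)"
    have rq: "real q = real p * real t" using qpt by simp
    have rqpos: "real q > 0" using q by simp
    have "2*real q*real m \<ge> 2*real q*((sqrt 2 - 1) * real n + (sqrt 2 - 1) / (2 * real q))"
    proof -
      have "2 * real p * real t = 2 * real q" using rq by simp
      then have "real m \<ge> (sqrt 2 - 1) * real n + (sqrt 2 - 1) / (2 * real q)" using h by (simp only:)
      then show ?thesis using rqpos by (intro mult_left_mono) auto
    qed
    also have "2*real q*((sqrt 2 - 1) * real n + (sqrt 2 - 1) / (2 * real q)) = (sqrt 2 - 1)*(2*real q*real n + 1)"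
      using rqpos by (simp add: field_simps)
    finally have h2: "2*real q*real m + 2*real q*real n + 1 \<ge> sqrt 2 * (2*real q*real n + 1)"
      by (simp add: algebra_simps)
    have "0 \<le> sqrt 2 * (2*real q*real n + 1)" by simp
    then have "(sqrt 2 * (2*real q*real n + 1))^2 \<le> (2*real q*real m + 2*real q*real n + 1)^2"
      by (rule power_mono[OF h2])
    then have "2 * (2*real q*real n + 1)^2 \<le> (2*real q*real m + 2*real q*real n + 1)^2"
      by (simp add: power_mult_distrib)
    then have "real_of_int (2 * (2*int q*int n + 1)^2) \<le> real_of_int ((2*int q*int m + 2*int q*int n + 1)^2)"
      by simp
    then have "2 * (2*int q*int n + 1)^2 \<le> (2*int q*int m + 2*int q*int n + 1)^2"
      by (simp only: of_int_le_iff)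
    then have "0 \<le> 4*int q*Lz - 1" using iden by linarith
    then have "0 < int q * Lz" by linarith
    then have "0 < Lz" using qpos by (simp add: zero_less_mult_iff)
    then show ?thesis unfolding Lz_def by simp
  qed
qed


lemma card_tKmn: "card (tKmn_verts t m n) = t*(m+n)"
proof -
  have e: "tKmn_verts t m n = {..<t} \<times> (SIGMA b:(UNIV::bool set). {..<(if b then n else m)})"
    unfolding tKmn_verts_def by auto
  have "card (SIGMA b:(UNIV::bool set). {..<(if b then n else m)}) = m + n"
    by (subst card_SigmaI) (auto simp: UNIV_bool)
  then show ?thesis unfolding e by (simp add: card_cartesian_product)
qed

theorem theorem20:
  fixes p t m n :: nat and V :: "'a set" and E :: "'a \<Rightarrow> 'a \<Rightarrow> bool"
  assumes "p \<ge> 1" and "t \<ge> 1"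
    and "even m" and "even n" and "m > 0" and "n > 0" and "m \<le> n"
    and "regular_graph V E" and "card V = p"
    and "(m + n) mod 4 = 0"
    and "(1::int) = 2 * (2*int p*int t*int n + 1)^2 - (2*int p*int t*int m + 2*int p*int t*int n + 1)^2
         \<or> real m \<ge> (sqrt 2 - 1) * real n + (sqrt 2 - 1) / (2 * real p * real t)"
  shows "distance_magic (kron_verts (tKmn_verts t m n) V) (kron_adj (tKmn_adj t m n) E)"
proof -
  note p1 = assms(1) and t1 = assms(2) and me = assms(3) and ne = assms(4) and mpos = assms(5)
    and mn = assms(7) and reg = assms(8) and cardV = assms(9) and m4 = assms(10) and ii = assms(11)
  define q where "q = p*t"
  have q1: "q \<ge> 1" unfolding q_def using p1 t1 by simp
  obtain a d where ad: "m = 2*a" "n = 2*a + 4*d"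
  proof -
    obtain a where a: "m = 2*a" using me by blast
    obtain b where b: "n = 2*b" using ne by blast
    have "a \<le> b" using mn a b by simp
    have "(2*a + 2*b) mod 4 = 0" using m4 a b by simp
    then have "even (a + b)" by presburger
    then have "even (b - a)" using \<open>a \<le> b\<close> by presburger
    then obtain d where "b - a = 2*d" by blast
    then show ?thesis using that[of a d] a b \<open>a \<le> b\<close> by simp
  qed
  have apos: "a > 0" using mpos ad by simp
  have L0: "0 \<le> int q*int m^2 + 2*int q*int m*int n - int q*int n^2 + int m - int n"
    by (rule L_from_ii[OF q_def q1 ii])
  have L: "int q*int (2*a)^2 + 2*int q*int (2*a)*int (2*a+4*d) - int q*int (2*a+4*d)^2 + int (2*a) - int (2*a+4*d) \<ge> 0"
    using L0 unfolding ad .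
  obtain Bk where BB: "(\<forall>\<beta><q. \<forall>b. Bk \<beta> b \<subseteq> {1..q*(4*a+4*d)} \<and> card (Bk \<beta> b) = (if b then 2*a+4*d else 2*a) \<and>
                 \<Sum>(Bk \<beta> b) = (a+d)*(q*(4*a+4*d)+1)) \<and>
             (\<forall>\<beta><q. \<forall>\<beta>'<q. \<forall>b b'. (\<beta>,b) \<noteq> (\<beta>',b') \<longrightarrow> Bk \<beta> b \<inter> Bk \<beta>' b' = {})"
    using partition_blocks[OF q1 apos L] by (elim exE) (rule that)
  have Bsub: "\<And>\<beta> b. \<beta> < q \<Longrightarrow> Bk \<beta> b \<subseteq> {1..q*(4*a+4*d)}"
    and Bcard: "\<And>\<beta> b. \<beta> < q \<Longrightarrow> card (Bk \<beta> b) = (if b then 2*a+4*d else 2*a)"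
    and Bsum: "\<And>\<beta> b. \<beta> < q \<Longrightarrow> \<Sum>(Bk \<beta> b) = (a+d)*(q*(4*a+4*d)+1)"
    and Bdisj: "\<And>\<beta> \<beta>' b b'. \<beta> < q \<Longrightarrow> \<beta>' < q \<Longrightarrow> (\<beta>,b) \<noteq> (\<beta>',b') \<Longrightarrow> Bk \<beta> b \<inter> Bk \<beta>' b' = {}"
    using BB by auto
  define sz where "sz b = (if b then n else m)" for b :: bool
  define N where "N = q*(m+n)"
  define c where "c = (a+d)*(N+1)"
  have szc: "card (Bk \<beta> b) = sz b" if "\<beta> < q" for \<beta> b
    using Bcard[OF that] unfolding sz_def ad by simp
  have BN: "Bk \<beta> b \<subseteq> {1..N}" if "\<beta> < q" for \<beta> b
    using Bsub[OF that] unfolding N_def ad by (simp add: algebra_simps)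
  have Bc: "\<Sum>(Bk \<beta> b) = c" if "\<beta> < q" for \<beta> b
    using Bsum[OF that] unfolding c_def N_def ad by (simp add: algebra_simps)
  define g where "g \<beta> b = (SOME h. bij_betw h {0..<sz b} (Bk \<beta> b))" for \<beta> b
  have gbij: "bij_betw (g \<beta> b) {0..<sz b} (Bk \<beta> b)" if "\<beta> < q" for \<beta> b
  proof -
    have "finite (Bk \<beta> b)" using BN[OF that] finite_subset by blast
    then have "\<exists>h. bij_betw h {0..<sz b} (Bk \<beta> b)"
      using ex_bij_betw_nat_finite[of "Bk \<beta> b"] szc[OF that] by simp
    then show ?thesis unfolding g_def by (rule someI_ex)
  qed
  have simpG: "simple_graph V E" and "\<exists>r. \<forall>x\<in>V. card (nbhd V E x) = r"
    using reg unfolding regular_graph_def by auto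
  then obtain r where rdeg: "\<And>x. x \<in> V \<Longrightarrow> card (nbhd V E x) = r" by blast
  have finV: "finite V" using simpG unfolding simple_graph_def by simp
  obtain e where e: "bij_betw e V {0..<p}"
    using ex_bij_betw_finite_nat[OF finV] cardV by auto
  have elt: "e x < p" if "x \<in> V" for x using e that bij_betw_apply by fastforce
  have einj: "inj_on e V" using e bij_betw_def by blast
  define \<beta>f where "\<beta>f i x = i*p + e x" for i x
  have \<beta>lt: "\<beta>f i x < q" if "i < t" "x \<in> V" for i x
  proof -
    have "Suc i * p \<le> t * p" using that(1) by (intro mult_le_mono1) simp
    then show ?thesis unfolding \<beta>f_def q_def using elt[OF that(2)] by (simp add: mult.commute)
  qed
  have \<beta>inj: "i = i' \<and> x = x'" if "\<beta>f i x = \<beta>f i' x'" "x \<in> V" "x' \<in> V" for i i' x x'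
  proof -
    have "(i*p + e x) div p = i" "(i*p + e x) mod p = e x"
      "(i'*p + e x') div p = i'" "(i'*p + e x') mod p = e x'"
      using elt[OF that(2)] elt[OF that(3)] by simp_all
    then have "i = i'" "e x = e x'" using that(1) unfolding \<beta>f_def by metis+
    then show ?thesis using einj that(2,3) inj_on_def by metis
  qed
  define VV where "VV = kron_verts (tKmn_verts t m n) V"
  define f where "f w = g (\<beta>f (fst (fst w)) (snd w)) (fst (snd (fst w))) (snd (snd (fst w)))" for w
  have memVV: "((i,b,j),x) \<in> VV \<longleftrightarrow> i < t \<and> j < sz b \<and> x \<in> V" for i b j x
    unfolding VV_def kron_verts_def tKmn_verts_def sz_def by auto
  have fval: "f ((i,b,j),x) = g (\<beta>f i x) b j" for i b j x unfolding f_def by simp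
  have fin: "f w \<in> Bk (\<beta>f (fst (fst w)) (snd w)) (fst (snd (fst w)))" if "w \<in> VV" for w
  proof -
    obtain i b j x where w: "w = ((i,b,j),x)" by (metis prod.collapse)
    have h: "i < t" "j < sz b" "x \<in> V" using that memVV unfolding w by auto
    show ?thesis unfolding w fval using gbij[OF \<beta>lt[OF h(1) h(3)], of b] h(2)
      by (simp add: bij_betw_apply)
  qed
  have cardVV: "card VV = N"
    unfolding VV_def kron_verts_def N_def q_def
    by (simp add: card_cartesian_product card_tKmn cardV algebra_simps)
  have "N > 0" unfolding N_def using q1 mpos by simp
  then have finVV: "finite VV" using cardVV card_ge_0_finite by metis
  have fimg: "f ` VV \<subseteq> {1..N}"
  proof
    fix y assume "y \<in> f ` VV"
    then obtain w where w: "w \<in> VV" "y = f w" by auto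
    obtain i b j x where ww: "w = ((i,b,j),x)" by (metis prod.collapse)
    have h: "i < t" "x \<in> V" using w(1) memVV unfolding ww by auto
    show "y \<in> {1..N}" using fin[OF w(1)] BN[OF \<beta>lt[OF h], of b] unfolding w(2) ww by auto
  qed
  have finj: "inj_on f VV"
  proof
    fix w w' assume w: "w \<in> VV" and w': "w' \<in> VV" and eq: "f w = f w'"
    obtain i b j x where ww: "w = ((i,b,j),x)" by (metis prod.collapse)
    obtain i' b' j' x' where ww': "w' = ((i',b',j'),x')" by (metis prod.collapse)
    have h: "i < t" "j < sz b" "x \<in> V" using w memVV unfolding ww by auto
    have h': "i' < t" "j' < sz b'" "x' \<in> V" using w' memVV unfolding ww' by auto
    have "f w \<in> Bk (\<beta>f i x) b" using fin[OF w] unfolding ww by simp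
    moreover have "f w \<in> Bk (\<beta>f i' x') b'" using fin[OF w'] eq unfolding ww' by simp
    ultimately have same: "(\<beta>f i x, b) = (\<beta>f i' x', b')"
      using Bdisj[OF \<beta>lt[OF h(1) h(3)] \<beta>lt[OF h'(1) h'(3)]] by blast
    then have ix: "i = i'" "x = x'" "b = b'" using \<beta>inj h(3) h'(3) by auto
    have "g (\<beta>f i x) b j = g (\<beta>f i x) b j'" using eq unfolding ww ww' fval ix(1,2,3) by simp
    then have "j = j'" using gbij[OF \<beta>lt[OF h(1) h(3)], of b] h(2) h'(2) ix
      unfolding bij_betw_def inj_on_def by auto
    then show "w = w'" unfolding ww ww' using ix by simp
  qed
  have fbij: "bij_betw f VV {1..N}"
  proof -
    have "card (f ` VV) = card {1..N}" using card_image[OF finj] cardVV by simp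
    then have "f ` VV = {1..N}" using fimg by (intro card_subset_eq) auto
    then show ?thesis using finj unfolding bij_betw_def by simp
  qed
  have nb: "(\<Sum>w\<in>nbhd VV (kron_adj (tKmn_adj t m n) E) u. f w) = r * c" if u: "u \<in> VV" for u
  proof -
    obtain i b j x where uu: "u = ((i,b,j),x)" by (metis prod.collapse)
    have h: "i < t" "j < sz b" "x \<in> V" using u memVV unfolding uu by auto
    define NX where "NX = nbhd V E x"
    have NXV: "NX \<subseteq> V" unfolding NX_def nbhd_def by auto
    have finNX: "finite NX" using NXV finV finite_subset by blast
    define emb where "emb z = ((i, \<not> b, fst z), snd z)" for z :: "nat \<times> 'a"
    have nbeq: "nbhd VV (kron_adj (tKmn_adj t m n) E) u = emb ` ({0..<sz (\<not> b)} \<times> NX)"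
    proof (rule set_eqI)
      fix w :: "(nat \<times> bool \<times> nat) \<times> 'a"
      obtain i' b' j' y where ww: "w = ((i',b',j'),y)" by (metis prod.collapse)
      have "w \<in> nbhd VV (kron_adj (tKmn_adj t m n) E) u \<longleftrightarrow>
            (i' = i \<and> b' = (\<not> b) \<and> j' < sz b' \<and> y \<in> NX)"
        using h simpG unfolding ww uu nbhd_def NX_def kron_adj_def tKmn_adj_def memVV
          simple_graph_def
        by (auto simp: VV_def kron_verts_def tKmn_verts_def sz_def)
      also have "\<dots> \<longleftrightarrow> w \<in> emb ` ({0..<sz (\<not> b)} \<times> NX)"
        unfolding ww emb_def by (auto simp: image_iff)
      finally show "w \<in> nbhd VV (kron_adj (tKmn_adj t m n) E) u \<longleftrightarrow> w \<in> emb ` ({0..<sz (\<not> b)} \<times> NX)" .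
    qed
    have embinj: "inj_on emb ({0..<sz (\<not> b)} \<times> NX)" unfolding emb_def inj_on_def by auto
    have "(\<Sum>w\<in>nbhd VV (kron_adj (tKmn_adj t m n) E) u. f w) = (\<Sum>z\<in>{0..<sz (\<not> b)} \<times> NX. f (emb z))"
      unfolding nbeq by (rule sum.reindex[OF embinj, unfolded comp_def])
    also have "\<dots> = (\<Sum>j'\<in>{0..<sz (\<not> b)}. \<Sum>y\<in>NX. g (\<beta>f i y) (\<not> b) j')"
      unfolding emb_def fval by (simp add: sum.cartesian_product split_def)
    also have "\<dots> = (\<Sum>y\<in>NX. \<Sum>j'\<in>{0..<sz (\<not> b)}. g (\<beta>f i y) (\<not> b) j')"
      by (rule sum.swap)
    also have "\<dots> = (\<Sum>y\<in>NX. c)"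
    proof (rule sum.cong[OF refl])
      fix y assume "y \<in> NX"
      then have yV: "y \<in> V" using NXV by auto
      have "(\<Sum>j'\<in>{0..<sz (\<not> b)}. g (\<beta>f i y) (\<not> b) j') = \<Sum>(Bk (\<beta>f i y) (\<not> b))"
        using sum.reindex_bij_betw[OF gbij[OF \<beta>lt[OF h(1) yV]], of id] by simp
      then show "(\<Sum>j'\<in>{0..<sz (\<not> b)}. g (\<beta>f i y) (\<not> b) j') = c"
        using Bc[OF \<beta>lt[OF h(1) yV]] by simp
    qed
    also have "\<dots> = r * c" using rdeg[OF h(3)] unfolding NX_def by simp
    finally show ?thesis .
  qed
  show ?thesis
    unfolding distance_magic_def VV_def[symmetric]
    using fbij nb cardVV by (intro exI[of _ f] exI[of _ "r*c"]) auto
qed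

end
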